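(* For integers $n$ and $a$ with $n\ge a$, $$J\mathcal{G}_{n+a}^{(3)}J\mathcal{G}_{n-a}^{(3)}-\left[J\mathcal{G}_{n}^{(3)}\right]^{2}=\frac{1}{49}\Big\{2^{n+1}\left[\Theta Y_{n-a}(a)-2^{-a}Y_{n}(a)\Theta\right]-X_{a}\left[X_{a}\Xi-14X_{a+1}\Omega\right]\Big\}$$ and $$K\mathcal{G}_{n+a}^{(3)}K\mathcal{G}_{n-a}^{(3)}-\left[K\mathcal{G}_{n}^{(3)}\right]^{2}=2^{n}\left[\Theta Y^{*}_{n-a}(a)-2^{-a}Y^{*}_{n}(a)\Theta\right]-X_{a}\left[X_{a}\Xi^{*}-6X_{a+1}\Omega\right],$$ where $Y_{n}(a)=X_{n}(2^{a}\mathbf{A}+X_{a+2}\mathbf{A}-X_{a}\mathbf{B})-X_{n+1}(2^{a}\mathbf{B}+X_{a}\mathbf{A}-X_{a+1}\mathbf{B})$, $Y^{*}_{n}(a)=X_{n}(2^{a}\mathbf{C}+X_{a+2}\mathbf{C}-X_{a}\mathbf{D})-X_{n+1}(2^{a}\mathbf{D}+X_{a}\mathbf{C}-X_{a+1}\mathbf{D})$, $\Xi=\mathbf{A}^2+\mathbf{A}\mathbf{B}+\mathbf{B}^2$ and $\Xi^{*}=\mathbf{C}^2+\mathbf{C}\mathbf{D}+\mathbf{D}^2$.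
   Context: Fix real numbers $\lambda_1,\lambda_2,\lambda_3$. The algebra $\mathbb{H}_{\lambda_1,\lambda_2,\lambda_3}$ of 3-parameter generalized quaternions is the real associative algebra of elements $\psi_0+\psi_1\mathbf{e}_1+\psi_2\mathbf{e}_2+\psi_3\mathbf{e}_3$ ($\psi_i\in\mathbb{R}$) with $\mathbf{e}_1^2=-\lambda_1\lambda_2$, $\mathbf{e}_2^2=-\lambda_1\lambda_3$, $\mathbf{e}_3^2=-\lambda_2\lambda_3$, $\mathbf{e}_1\mathbf{e}_2=-\mathbf{e}_2\mathbf{e}_1=\lambda_1\mathbf{e}_3$, $\mathbf{e}_1\mathbf{e}_3=-\mathbf{e}_3\mathbf{e}_1=-\lambda_2\mathbf{e}_2$, $\mathbf{e}_2\mathbf{e}_3=-\mathbf{e}_3\mathbf{e}_2=\lambda_3\mathbf{e}_1$. The third-order Jacobsthal numbers satisfy $J_0^{(3)}=0$, $J_1^{(3)}=J_2^{(3)}=1$, $J_n^{(3)}=J_{n-1}^{(3)}+J_{n-2}^{(3)}+2J_{n-3}^{(3)}$; the modified third-order Jacobsthal numbers satisfy $K_0^{(3)}=3$, $K_1^{(3)}=1$, $K_2^{(3)}=3$, $K_n^{(3)}=K_{n-1}^{(3)}+K_{n-2}^{(3)}+2K_{n-3}^{(3)}$; both are extended to all integers $n$ by running the recurrence backwards (equivalently by the Binet formulas $J_n^{(3)}=\frac17[2^{n+1}+X_n-2X_{n+1}]$, $K_n^{(3)}=2^n+X_n+2X_{n+1}$). For all integers $n$ define $J\mathcal{G}_n^{(3)}=J_n^{(3)}+J_{n+1}^{(3)}\mathbf{e}_1+J_{n+2}^{(3)}\mathbf{e}_2+J_{n+3}^{(3)}\mathbf{e}_3$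 and $K\mathcal{G}_n^{(3)}=K_n^{(3)}+K_{n+1}^{(3)}\mathbf{e}_1+K_{n+2}^{(3)}\mathbf{e}_2+K_{n+3}^{(3)}\mathbf{e}_3$. Here $X_n=0,1,-1$ according as $n\equiv0,1,2\pmod 3$, $\Theta=1+2\mathbf{e}_1+4\mathbf{e}_2+8\mathbf{e}_3$, $\mathbf{A}=1+2\mathbf{e}_1-3\mathbf{e}_2+\mathbf{e}_3$, $\mathbf{B}=2-3\mathbf{e}_1+\mathbf{e}_2+2\mathbf{e}_3$, $\mathbf{C}=1-2\mathbf{e}_1+\mathbf{e}_2+\mathbf{e}_3$, $\mathbf{D}=-2+\mathbf{e}_1+\mathbf{e}_2-2\mathbf{e}_3$, and $\Omega=\lambda_3\mathbf{e}_1+\lambda_2\mathbf{e}_2+\lambda_1\mathbf{e}_3$. *)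

theory Defs
  imports Complex_Main
begin

text \<open>An element psi0 + psi1 e1 + psi2 e2 + psi3 e3 is represented by its four
  real coordinates.  The multiplication depends on the parameters l1 l2 l3.\<close>

datatype gq = GQ (c0: real) (c1: real) (c2: real) (c3: real)

definition gadd :: "gq \<Rightarrow> gq \<Rightarrow> gq" where
  "gadd p q = GQ (c0 p + c0 q) (c1 p + c1 q) (c2 p + c2 q) (c3 p + c3 q)"

definition gsub :: "gq \<Rightarrow> gq \<Rightarrow> gq" where
  "gsub p q = GQ (c0 p - c0 q) (c1 p - c1 q) (c2 p - c2 q) (c3 p - c3 q)"

definition gscale :: "real \<Rightarrow> gq \<Rightarrow> gq" where
  "gscale r q = GQ (r * c0 q) (r * c1 q) (r * c2 q) (r * c3 q)"

text \<open>Bilinear extension of the multiplication table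
  e1^2 = -l1 l2, e2^2 = -l1 l3, e3^2 = -l2 l3,
  e1 e2 = -e2 e1 = l1 e3, e1 e3 = -e3 e1 = -l2 e2, e2 e3 = -e3 e2 = l3 e1.\<close>
definition gmul :: "real \<Rightarrow> real \<Rightarrow> real \<Rightarrow> gq \<Rightarrow> gq \<Rightarrow> gq" where
  "gmul l1 l2 l3 p q = GQ
     (c0 p * c0 q - l1 * l2 * c1 p * c1 q - l1 * l3 * c2 p * c2 q - l2 * l3 * c3 p * c3 q)
     (c0 p * c1 q + c1 p * c0 q + l3 * (c2 p * c3 q - c3 p * c2 q))
     (c0 p * c2 q + c2 p * c0 q + l2 * (c3 p * c1 q - c1 p * c3 q))
     (c0 p * c3 q + c3 p * c0 q + l1 * (c1 p * c2 q - c2 p * c1 q))"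

function Jac3 :: "int \<Rightarrow> real" where
  "Jac3 n = (if n = 0 then 0 else if n = 1 then 1 else if n = 2 then 1
             else if n > 2 then Jac3 (n - 1) + Jac3 (n - 2) + 2 * Jac3 (n - 3)
             else (Jac3 (n + 3) - Jac3 (n + 2) - Jac3 (n + 1)) / 2)"
  by auto
termination
  by (relation "measure (\<lambda>n. nat \<bar>n - 1\<bar>)") auto

function MJac3 :: "int \<Rightarrow> real" where
  "MJac3 n = (if n = 0 then 3 else if n = 1 then 1 else if n = 2 then 3
             else if n > 2 then MJac3 (n - 1) + MJac3 (n - 2) + 2 * MJac3 (n - 3)
             else (MJac3 (n + 3) - MJac3 (n + 2) - MJac3 (n + 1)) / 2)"
  by auto
termination
  by (relation "measure (\<lambda>n. nat \<bar>n - 1\<bar>)") auto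

declare Jac3.simps[simp del] MJac3.simps[simp del]

definition JG :: "int \<Rightarrow> gq" where
  "JG n = GQ (Jac3 n) (Jac3 (n + 1)) (Jac3 (n + 2)) (Jac3 (n + 3))"

definition KG :: "int \<Rightarrow> gq" where
  "KG n = GQ (MJac3 n) (MJac3 (n + 1)) (MJac3 (n + 2)) (MJac3 (n + 3))"

definition Xs :: "int \<Rightarrow> real" where
  "Xs n = (if n mod 3 = 0 then 0 else if n mod 3 = 1 then 1 else -1)"

definition Theta :: gq where "Theta = GQ 1 2 4 8"
definition qA :: gq where "qA = GQ 1 2 (-3) 1"
definition qB :: gq where "qB = GQ 2 (-3) 1 2"
definition qC :: gq where "qC = GQ 1 (-2) 1 1"
definition qD :: gq where "qD = GQ (-2) 1 1 (-2)"

definition Omega :: "real \<Rightarrow> real \<Rightarrow> real \<Rightarrow> gq" where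
  "Omega l1 l2 l3 = GQ 0 l3 l2 l1"

definition Yg :: "gq \<Rightarrow> gq \<Rightarrow> int \<Rightarrow> int \<Rightarrow> gq" where
  "Yg P Q n a =
     gsub (gscale (Xs n) (gsub (gadd (gscale (2 powi a) P) (gscale (Xs (a + 2)) P)) (gscale (Xs a) Q)))
          (gscale (Xs (n + 1)) (gsub (gadd (gscale (2 powi a) Q) (gscale (Xs a) P)) (gscale (Xs (a + 1)) Q)))"

definition Y :: "int \<Rightarrow> int \<Rightarrow> gq" where "Y n a = Yg qA qB n a"
definition Ystar :: "int \<Rightarrow> int \<Rightarrow> gq" where "Ystar n a = Yg qC qD n a"

definition Xi :: "real \<Rightarrow> real \<Rightarrow> real \<Rightarrow> gq" where
  "Xi l1 l2 l3 = gadd (gadd (gmul l1 l2 l3 qA qA) (gmul l1 l2 l3 qA qB)) (gmul l1 l2 l3 qB qB)"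

definition Xistar :: "real \<Rightarrow> real \<Rightarrow> real \<Rightarrow> gq" where
  "Xistar l1 l2 l3 = gadd (gadd (gmul l1 l2 l3 qC qC) (gmul l1 l2 l3 qC qD)) (gmul l1 l2 l3 qD qD)"

end

theory Submission
  imports Defs
begin


lemma Xs_cong: "a mod 3 = b mod 3 \<Longrightarrow> Xs a = Xs b" by (simp add: Xs_def)
lemma Xs_sum: "Xs m + Xs (m+1) + Xs (m+2) = 0"
proof -
  have "m mod 3 = 0 \<or> m mod 3 = 1 \<or> m mod 3 = 2" by presburger
  moreover have "m mod 3 = 0 \<Longrightarrow> (m+1) mod 3 = 1 \<and> (m+2) mod 3 = 2" by presburger
  moreover have "m mod 3 = 1 \<Longrightarrow> (m+1) mod 3 = 2 \<and> (m+2) mod 3 = 0" by presburger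
  moreover have "m mod 3 = 2 \<Longrightarrow> (m+1) mod 3 = 0 \<and> (m+2) mod 3 = 1" by presburger
  ultimately show ?thesis unfolding Xs_def by auto
qed

lemma pw: "(2::real) powi (m + k) = 2 powi m * 2 powi k" by (simp add: power_int_add)
lemma pw2: "(2::real) powi m = 2 powi (m - k) * 2 powi k" using pw[of "m-k" k] by simp


definition FJ :: "int \<Rightarrow> real" where "FJ n = (2 powi (n+1) + Xs n - 2 * Xs (n+1)) / 7"
definition FK :: "int \<Rightarrow> real" where "FK n = 2 powi n + Xs n + 2 * Xs (n+1)"

lemma Xsh: "Xs (m+3) = Xs m" "Xs (m+4) = Xs (m+1)" "Xs (m+2) = - Xs m - Xs (m+1)"
proof -
  show "Xs (m+3) = Xs m" "Xs (m+4) = Xs (m+1)" by (rule Xs_cong, presburger)+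
  show "Xs (m+2) = - Xs m - Xs (m+1)" using Xs_sum[of m] by simp
qed

lemma FJ_rec: "FJ (m+3) = FJ (m+2) + FJ (m+1) + 2 * FJ m"
proof -
  have e: "m+3+1 = m+4" "m+2+1 = m+3" "m+1+1 = m+2" by simp_all
  have p: "2 powi (m+4) = 16 * (2::real) powi m" "2 powi (m+3) = 8 * (2::real) powi m"
     "2 powi (m+2) = 4 * (2::real) powi m" "2 powi (m+1) = 2 * (2::real) powi m"
    using pw[of m 4] pw[of m 3] pw[of m 2] pw[of m 1] by simp_all
  show ?thesis unfolding FJ_def e p Xsh by (simp add: field_simps)
qed

lemma FK_rec: "FK (m+3) = FK (m+2) + FK (m+1) + 2 * FK m"
proof -
  have e: "m+3+1 = m+4" "m+2+1 = m+3" "m+1+1 = m+2" by simp_all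
  have p: "2 powi (m+4) = 16 * (2::real) powi m" "2 powi (m+3) = 8 * (2::real) powi m"
     "2 powi (m+2) = 4 * (2::real) powi m" "2 powi (m+1) = 2 * (2::real) powi m"
    using pw[of m 4] pw[of m 3] pw[of m 2] pw[of m 1] by simp_all
  show ?thesis unfolding FK_def e p Xsh by (simp add: field_simps)
qed

lemma Jac3_FJ: "Jac3 n = FJ n"
proof (induction n rule: Jac3.induct)
  case (1 n)
  show ?case
  proof (cases "n = 0 \<or> n = 1 \<or> n = 2")
    case True then show ?thesis by (elim disjE; subst Jac3.simps; simp add: FJ_def Xs_def)
  next
    case False
    show ?thesis
    proof (cases "n > 2")
      case True
      have j: "Jac3 n = Jac3 (n - 1) + Jac3 (n - 2) + 2 * Jac3 (n - 3)"
        using True False by (subst Jac3.simps) simp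
      have "Jac3 (n - 1) = FJ (n - 1)" "Jac3 (n - 2) = FJ (n - 2)" "Jac3 (n - 3) = FJ (n - 3)"
        using 1 True False by auto
      then show ?thesis using j FJ_rec[of "n-3"] by simp
    next
      case f2: False
      have j: "Jac3 n = (Jac3 (n + 3) - Jac3 (n + 2) - Jac3 (n + 1)) / 2"
        using f2 False by (subst Jac3.simps) simp
      have "Jac3 (n + 1) = FJ (n + 1)" "Jac3 (n + 2) = FJ (n + 2)" "Jac3 (n + 3) = FJ (n + 3)"
        using 1 f2 False by auto
      then show ?thesis using j FJ_rec[of "n"] by (simp add: add.commute)
    qed
  qed
qed

lemma MJac3_FK: "MJac3 n = FK n"
proof (induction n rule: MJac3.induct)
  case (1 n)
  show ?case
  proof (cases "n = 0 \<or> n = 1 \<or> n = 2")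
    case True then show ?thesis by (elim disjE; subst MJac3.simps; simp add: FK_def Xs_def)
  next
    case False
    show ?thesis
    proof (cases "n > 2")
      case True
      have j: "MJac3 n = MJac3 (n - 1) + MJac3 (n - 2) + 2 * MJac3 (n - 3)"
        using True False by (subst MJac3.simps) simp
      have "MJac3 (n - 1) = FK (n - 1)" "MJac3 (n - 2) = FK (n - 2)" "MJac3 (n - 3) = FK (n - 3)"
        using 1 True False by auto
      then show ?thesis using j FK_rec[of "n-3"] by simp
    next
      case f2: False
      have j: "MJac3 n = (MJac3 (n + 3) - MJac3 (n + 2) - MJac3 (n + 1)) / 2"
        using f2 False by (subst MJac3.simps) simp
      have "MJac3 (n + 1) = FK (n + 1)" "MJac3 (n + 2) = FK (n + 2)" "MJac3 (n + 3) = FK (n + 3)"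
        using 1 f2 False by auto
      then show ?thesis using j FK_rec[of "n"] by (simp add: add.commute)
    qed
  qed
qed


lemma JG_binet: "JG n = GQ ((2 * 2 powi n + Xs n - 2 * Xs (n+1)) / 7) ((4 * 2 powi n + 2 * Xs n + 3 * Xs (n+1)) / 7)
   ((8 * 2 powi n - 3 * Xs n - Xs (n+1)) / 7) ((16 * 2 powi n + Xs n - 2 * Xs (n+1)) / 7)"
proof -
  have e: "n+1+1 = n+2" "n+2+1 = n+3" "n+3+1 = n+4" by simp_all
  have p: "2 powi (n+1) = 2 * (2::real) powi n" "2 powi (n+2) = 4 * (2::real) powi n"
     "2 powi (n+3) = 8 * (2::real) powi n" "2 powi (n+4) = 16 * (2::real) powi n"
    using pw[of n 1] pw[of n 2] pw[of n 3] pw[of n 4] by simp_all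
  show ?thesis unfolding JG_def Jac3_FJ FJ_def e p Xsh by (simp add: field_simps)
qed

lemma KG_binet: "KG n = GQ (2 powi n + Xs n + 2 * Xs (n+1)) (2 * 2 powi n - 2 * Xs n - Xs (n+1))
   (4 * 2 powi n + Xs n - Xs (n+1)) (8 * 2 powi n + Xs n + 2 * Xs (n+1))"
proof -
  have e: "n+1+1 = n+2" "n+2+1 = n+3" "n+3+1 = n+4" by simp_all
  have p: "2 powi (n+1) = 2 * (2::real) powi n" "2 powi (n+2) = 4 * (2::real) powi n"
     "2 powi (n+3) = 8 * (2::real) powi n" "2 powi (n+4) = 16 * (2::real) powi n"
    using pw[of n 1] pw[of n 2] pw[of n 3] pw[of n 4] by simp_all
  show ?thesis unfolding KG_def MJac3_FK FK_def e p Xsh by (simp add: field_simps)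
qed

lemma Xs0: "m mod 3 = 0 \<Longrightarrow> Xs m = 0" by (simp add: Xs_def)
lemma Xs1: "m mod 3 = 1 \<Longrightarrow> Xs m = 1" by (simp add: Xs_def)
lemma Xs2: "m mod 3 = 2 \<Longrightarrow> Xs m = - 1" by (simp add: Xs_def)
lemma partJ:
  fixes l1 l2 l3 :: real and n a :: int
  shows "gsub (gmul l1 l2 l3 (JG (n + a)) (JG (n - a))) (gmul l1 l2 l3 (JG n) (JG n)) =
  gscale (1 / 49)
             (gsub (gscale (2 powi (n + 1))
                      (gsub (gmul l1 l2 l3 Theta (Y (n - a) a))
                            (gscale (2 powi (- a)) (gmul l1 l2 l3 (Y n a) Theta))))
                   (gscale (Xs a) (gsub (gscale (Xs a) (Xi l1 l2 l3))
                                        (gscale (14 * Xs (a + 1)) (Omega l1 l2 l3)))))"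
proof -
  define u where "u = (2::real) powi n"
  define v where "v = (2::real) powi a"
  have v: "v > 0" unfolding v_def by simp
  have P: "(2::real) powi (n+a) = u * v" "(2::real) powi (n-a) = u / v" "(2::real) powi (n+1) = 2 * u"
    "(2::real) powi (-a) = 1 / v"
    unfolding u_def v_def by (simp_all add: power_int_add power_int_diff power_int_minus field_simps)
  have "n mod 3 = 0 \<or> n mod 3 = 1 \<or> n mod 3 = 2" by presburger
  moreover have "a mod 3 = 0 \<or> a mod 3 = 1 \<or> a mod 3 = 2" by presburger
  ultimately show ?thesis
  proof (elim disjE)
    assume hn: "n mod 3 = 0" and ha: "a mod 3 = 0"
    have XX: "Xs (n) = 0" "Xs (n + 1) = 1" "Xs (n + a) = 0" "Xs (n + a + 1) = 1" "Xs (n - a) = 0" "Xs (n - a + 1) = 1" "Xs (a) = 0" "Xs (a + 1) = 1" "Xs (a + 2) = - 1"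
      by (rule Xs0 Xs1 Xs2, use hn ha in presburger)+
    show ?thesis
      unfolding Y_def Yg_def Xi_def JG_binet KG_binet
      unfolding XX P u_def[symmetric] v_def[symmetric]
      using v by (simp add: gmul_def gsub_def gscale_def gadd_def Theta_def qA_def qB_def qC_def qD_def Omega_def field_simps; algebra)
  next
    assume hn: "n mod 3 = 0" and ha: "a mod 3 = 1"
    have XX: "Xs (n) = 0" "Xs (n + 1) = 1" "Xs (n + a) = 1" "Xs (n + a + 1) = - 1" "Xs (n - a) = - 1" "Xs (n - a + 1) = 0" "Xs (a) = 1" "Xs (a + 1) = - 1" "Xs (a + 2) = 0"
      by (rule Xs0 Xs1 Xs2, use hn ha in presburger)+
    show ?thesis
      unfolding Y_def Yg_def Xi_def JG_binet KG_binet
      unfolding XX P u_def[symmetric] v_def[symmetric]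
      using v by (simp add: gmul_def gsub_def gscale_def gadd_def Theta_def qA_def qB_def qC_def qD_def Omega_def field_simps; algebra)
  next
    assume hn: "n mod 3 = 0" and ha: "a mod 3 = 2"
    have XX: "Xs (n) = 0" "Xs (n + 1) = 1" "Xs (n + a) = - 1" "Xs (n + a + 1) = 0" "Xs (n - a) = 1" "Xs (n - a + 1) = - 1" "Xs (a) = - 1" "Xs (a + 1) = 0" "Xs (a + 2) = 1"
      by (rule Xs0 Xs1 Xs2, use hn ha in presburger)+
    show ?thesis
      unfolding Y_def Yg_def Xi_def JG_binet KG_binet
      unfolding XX P u_def[symmetric] v_def[symmetric]
      using v by (simp add: gmul_def gsub_def gscale_def gadd_def Theta_def qA_def qB_def qC_def qD_def Omega_def field_simps; algebra)
  next
    assume hn: "n mod 3 = 1" and ha: "a mod 3 = 0"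
    have XX: "Xs (n) = 1" "Xs (n + 1) = - 1" "Xs (n + a) = 1" "Xs (n + a + 1) = - 1" "Xs (n - a) = 1" "Xs (n - a + 1) = - 1" "Xs (a) = 0" "Xs (a + 1) = 1" "Xs (a + 2) = - 1"
      by (rule Xs0 Xs1 Xs2, use hn ha in presburger)+
    show ?thesis
      unfolding Y_def Yg_def Xi_def JG_binet KG_binet
      unfolding XX P u_def[symmetric] v_def[symmetric]
      using v by (simp add: gmul_def gsub_def gscale_def gadd_def Theta_def qA_def qB_def qC_def qD_def Omega_def field_simps; algebra)
  next
    assume hn: "n mod 3 = 1" and ha: "a mod 3 = 1"
    have XX: "Xs (n) = 1" "Xs (n + 1) = - 1" "Xs (n + a) = - 1" "Xs (n + a + 1) = 0" "Xs (n - a) = 0" "Xs (n - a + 1) = 1" "Xs (a) = 1" "Xs (a + 1) = - 1" "Xs (a + 2) = 0"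
      by (rule Xs0 Xs1 Xs2, use hn ha in presburger)+
    show ?thesis
      unfolding Y_def Yg_def Xi_def JG_binet KG_binet
      unfolding XX P u_def[symmetric] v_def[symmetric]
      using v by (simp add: gmul_def gsub_def gscale_def gadd_def Theta_def qA_def qB_def qC_def qD_def Omega_def field_simps; algebra)
  next
    assume hn: "n mod 3 = 1" and ha: "a mod 3 = 2"
    have XX: "Xs (n) = 1" "Xs (n + 1) = - 1" "Xs (n + a) = 0" "Xs (n + a + 1) = 1" "Xs (n - a) = - 1" "Xs (n - a + 1) = 0" "Xs (a) = - 1" "Xs (a + 1) = 0" "Xs (a + 2) = 1"
      by (rule Xs0 Xs1 Xs2, use hn ha in presburger)+
    show ?thesis
      unfolding Y_def Yg_def Xi_def JG_binet KG_binet
      unfolding XX P u_def[symmetric] v_def[symmetric]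
      using v by (simp add: gmul_def gsub_def gscale_def gadd_def Theta_def qA_def qB_def qC_def qD_def Omega_def field_simps; algebra)
  next
    assume hn: "n mod 3 = 2" and ha: "a mod 3 = 0"
    have XX: "Xs (n) = - 1" "Xs (n + 1) = 0" "Xs (n + a) = - 1" "Xs (n + a + 1) = 0" "Xs (n - a) = - 1" "Xs (n - a + 1) = 0" "Xs (a) = 0" "Xs (a + 1) = 1" "Xs (a + 2) = - 1"
      by (rule Xs0 Xs1 Xs2, use hn ha in presburger)+
    show ?thesis
      unfolding Y_def Yg_def Xi_def JG_binet KG_binet
      unfolding XX P u_def[symmetric] v_def[symmetric]
      using v by (simp add: gmul_def gsub_def gscale_def gadd_def Theta_def qA_def qB_def qC_def qD_def Omega_def field_simps; algebra)
  next
    assume hn: "n mod 3 = 2" and ha: "a mod 3 = 1"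
    have XX: "Xs (n) = - 1" "Xs (n + 1) = 0" "Xs (n + a) = 0" "Xs (n + a + 1) = 1" "Xs (n - a) = 1" "Xs (n - a + 1) = - 1" "Xs (a) = 1" "Xs (a + 1) = - 1" "Xs (a + 2) = 0"
      by (rule Xs0 Xs1 Xs2, use hn ha in presburger)+
    show ?thesis
      unfolding Y_def Yg_def Xi_def JG_binet KG_binet
      unfolding XX P u_def[symmetric] v_def[symmetric]
      using v by (simp add: gmul_def gsub_def gscale_def gadd_def Theta_def qA_def qB_def qC_def qD_def Omega_def field_simps; algebra)
  next
    assume hn: "n mod 3 = 2" and ha: "a mod 3 = 2"
    have XX: "Xs (n) = - 1" "Xs (n + 1) = 0" "Xs (n + a) = 1" "Xs (n + a + 1) = - 1" "Xs (n - a) = 0" "Xs (n - a + 1) = 1" "Xs (a) = - 1" "Xs (a + 1) = 0" "Xs (a + 2) = 1"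
      by (rule Xs0 Xs1 Xs2, use hn ha in presburger)+
    show ?thesis
      unfolding Y_def Yg_def Xi_def JG_binet KG_binet
      unfolding XX P u_def[symmetric] v_def[symmetric]
      using v by (simp add: gmul_def gsub_def gscale_def gadd_def Theta_def qA_def qB_def qC_def qD_def Omega_def field_simps; algebra)
  qed
qed

lemma partK:
  fixes l1 l2 l3 :: real and n a :: int
  shows "gsub (gmul l1 l2 l3 (KG (n + a)) (KG (n - a))) (gmul l1 l2 l3 (KG n) (KG n)) =
  gsub (gscale (2 powi n)
                   (gsub (gmul l1 l2 l3 Theta (Ystar (n - a) a))
                         (gscale (2 powi (- a)) (gmul l1 l2 l3 (Ystar n a) Theta))))
                (gscale (Xs a) (gsub (gscale (Xs a) (Xistar l1 l2 l3))
                                     (gscale (6 * Xs (a + 1)) (Omega l1 l2 l3))))"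
proof -
  define u where "u = (2::real) powi n"
  define v where "v = (2::real) powi a"
  have v: "v > 0" unfolding v_def by simp
  have P: "(2::real) powi (n+a) = u * v" "(2::real) powi (n-a) = u / v" "(2::real) powi (n+1) = 2 * u"
    "(2::real) powi (-a) = 1 / v"
    unfolding u_def v_def by (simp_all add: power_int_add power_int_diff power_int_minus field_simps)
  have "n mod 3 = 0 \<or> n mod 3 = 1 \<or> n mod 3 = 2" by presburger
  moreover have "a mod 3 = 0 \<or> a mod 3 = 1 \<or> a mod 3 = 2" by presburger
  ultimately show ?thesis
  proof (elim disjE)
    assume hn: "n mod 3 = 0" and ha: "a mod 3 = 0"
    have XX: "Xs (n) = 0" "Xs (n + 1) = 1" "Xs (n + a) = 0" "Xs (n + a + 1) = 1" "Xs (n - a) = 0" "Xs (n - a + 1) = 1" "Xs (a) = 0" "Xs (a + 1) = 1" "Xs (a + 2) = - 1"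
      by (rule Xs0 Xs1 Xs2, use hn ha in presburger)+
    show ?thesis
      unfolding Ystar_def Yg_def Xistar_def JG_binet KG_binet
      unfolding XX P u_def[symmetric] v_def[symmetric]
      using v by (simp add: gmul_def gsub_def gscale_def gadd_def Theta_def qA_def qB_def qC_def qD_def Omega_def field_simps; algebra)
  next
    assume hn: "n mod 3 = 0" and ha: "a mod 3 = 1"
    have XX: "Xs (n) = 0" "Xs (n + 1) = 1" "Xs (n + a) = 1" "Xs (n + a + 1) = - 1" "Xs (n - a) = - 1" "Xs (n - a + 1) = 0" "Xs (a) = 1" "Xs (a + 1) = - 1" "Xs (a + 2) = 0"
      by (rule Xs0 Xs1 Xs2, use hn ha in presburger)+
    show ?thesis
      unfolding Ystar_def Yg_def Xistar_def JG_binet KG_binet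
      unfolding XX P u_def[symmetric] v_def[symmetric]
      using v by (simp add: gmul_def gsub_def gscale_def gadd_def Theta_def qA_def qB_def qC_def qD_def Omega_def field_simps; algebra)
  next
    assume hn: "n mod 3 = 0" and ha: "a mod 3 = 2"
    have XX: "Xs (n) = 0" "Xs (n + 1) = 1" "Xs (n + a) = - 1" "Xs (n + a + 1) = 0" "Xs (n - a) = 1" "Xs (n - a + 1) = - 1" "Xs (a) = - 1" "Xs (a + 1) = 0" "Xs (a + 2) = 1"
      by (rule Xs0 Xs1 Xs2, use hn ha in presburger)+
    show ?thesis
      unfolding Ystar_def Yg_def Xistar_def JG_binet KG_binet
      unfolding XX P u_def[symmetric] v_def[symmetric]
      using v by (simp add: gmul_def gsub_def gscale_def gadd_def Theta_def qA_def qB_def qC_def qD_def Omega_def field_simps; algebra)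
  next
    assume hn: "n mod 3 = 1" and ha: "a mod 3 = 0"
    have XX: "Xs (n) = 1" "Xs (n + 1) = - 1" "Xs (n + a) = 1" "Xs (n + a + 1) = - 1" "Xs (n - a) = 1" "Xs (n - a + 1) = - 1" "Xs (a) = 0" "Xs (a + 1) = 1" "Xs (a + 2) = - 1"
      by (rule Xs0 Xs1 Xs2, use hn ha in presburger)+
    show ?thesis
      unfolding Ystar_def Yg_def Xistar_def JG_binet KG_binet
      unfolding XX P u_def[symmetric] v_def[symmetric]
      using v by (simp add: gmul_def gsub_def gscale_def gadd_def Theta_def qA_def qB_def qC_def qD_def Omega_def field_simps; algebra)
  next
    assume hn: "n mod 3 = 1" and ha: "a mod 3 = 1"
    have XX: "Xs (n) = 1" "Xs (n + 1) = - 1" "Xs (n + a) = - 1" "Xs (n + a + 1) = 0" "Xs (n - a) = 0" "Xs (n - a + 1) = 1" "Xs (a) = 1" "Xs (a + 1) = - 1" "Xs (a + 2) = 0"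
      by (rule Xs0 Xs1 Xs2, use hn ha in presburger)+
    show ?thesis
      unfolding Ystar_def Yg_def Xistar_def JG_binet KG_binet
      unfolding XX P u_def[symmetric] v_def[symmetric]
      using v by (simp add: gmul_def gsub_def gscale_def gadd_def Theta_def qA_def qB_def qC_def qD_def Omega_def field_simps; algebra)
  next
    assume hn: "n mod 3 = 1" and ha: "a mod 3 = 2"
    have XX: "Xs (n) = 1" "Xs (n + 1) = - 1" "Xs (n + a) = 0" "Xs (n + a + 1) = 1" "Xs (n - a) = - 1" "Xs (n - a + 1) = 0" "Xs (a) = - 1" "Xs (a + 1) = 0" "Xs (a + 2) = 1"
      by (rule Xs0 Xs1 Xs2, use hn ha in presburger)+
    show ?thesis
      unfolding Ystar_def Yg_def Xistar_def JG_binet KG_binet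
      unfolding XX P u_def[symmetric] v_def[symmetric]
      using v by (simp add: gmul_def gsub_def gscale_def gadd_def Theta_def qA_def qB_def qC_def qD_def Omega_def field_simps; algebra)
  next
    assume hn: "n mod 3 = 2" and ha: "a mod 3 = 0"
    have XX: "Xs (n) = - 1" "Xs (n + 1) = 0" "Xs (n + a) = - 1" "Xs (n + a + 1) = 0" "Xs (n - a) = - 1" "Xs (n - a + 1) = 0" "Xs (a) = 0" "Xs (a + 1) = 1" "Xs (a + 2) = - 1"
      by (rule Xs0 Xs1 Xs2, use hn ha in presburger)+
    show ?thesis
      unfolding Ystar_def Yg_def Xistar_def JG_binet KG_binet
      unfolding XX P u_def[symmetric] v_def[symmetric]
      using v by (simp add: gmul_def gsub_def gscale_def gadd_def Theta_def qA_def qB_def qC_def qD_def Omega_def field_simps; algebra)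
  next
    assume hn: "n mod 3 = 2" and ha: "a mod 3 = 1"
    have XX: "Xs (n) = - 1" "Xs (n + 1) = 0" "Xs (n + a) = 0" "Xs (n + a + 1) = 1" "Xs (n - a) = 1" "Xs (n - a + 1) = - 1" "Xs (a) = 1" "Xs (a + 1) = - 1" "Xs (a + 2) = 0"
      by (rule Xs0 Xs1 Xs2, use hn ha in presburger)+
    show ?thesis
      unfolding Ystar_def Yg_def Xistar_def JG_binet KG_binet
      unfolding XX P u_def[symmetric] v_def[symmetric]
      using v by (simp add: gmul_def gsub_def gscale_def gadd_def Theta_def qA_def qB_def qC_def qD_def Omega_def field_simps; algebra)
  next
    assume hn: "n mod 3 = 2" and ha: "a mod 3 = 2"
    have XX: "Xs (n) = - 1" "Xs (n + 1) = 0" "Xs (n + a) = 1" "Xs (n + a + 1) = - 1" "Xs (n - a) = 0" "Xs (n - a + 1) = 1" "Xs (a) = - 1" "Xs (a + 1) = 0" "Xs (a + 2) = 1"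
      by (rule Xs0 Xs1 Xs2, use hn ha in presburger)+
    show ?thesis
      unfolding Ystar_def Yg_def Xistar_def JG_binet KG_binet
      unfolding XX P u_def[symmetric] v_def[symmetric]
      using v by (simp add: gmul_def gsub_def gscale_def gadd_def Theta_def qA_def qB_def qC_def qD_def Omega_def field_simps; algebra)
  qed
qed

theorem corollary3p2:
  fixes l1 l2 l3 :: real and n a :: int
  assumes "n \<ge> a"
  shows "gsub (gmul l1 l2 l3 (JG (n + a)) (JG (n - a))) (gmul l1 l2 l3 (JG n) (JG n)) =
           gscale (1 / 49)
             (gsub (gscale (2 powi (n + 1))
                      (gsub (gmul l1 l2 l3 Theta (Y (n - a) a))
                            (gscale (2 powi (- a)) (gmul l1 l2 l3 (Y n a) Theta))))
                   (gscale (Xs a) (gsub (gscale (Xs a) (Xi l1 l2 l3))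
                                        (gscale (14 * Xs (a + 1)) (Omega l1 l2 l3)))))
    \<and> gsub (gmul l1 l2 l3 (KG (n + a)) (KG (n - a))) (gmul l1 l2 l3 (KG n) (KG n)) =
           gsub (gscale (2 powi n)
                   (gsub (gmul l1 l2 l3 Theta (Ystar (n - a) a))
                         (gscale (2 powi (- a)) (gmul l1 l2 l3 (Ystar n a) Theta))))
                (gscale (Xs a) (gsub (gscale (Xs a) (Xistar l1 l2 l3))
                                     (gscale (6 * Xs (a + 1)) (Omega l1 l2 l3))))"
  using partJ partK by blast

end
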